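(* Let $r=[r_0,\ldots,r_m]$ and $c=[c_0,\ldots,c_n]$ be selections of rows and columns of the Pascal upper triangular matrix $T$, and let $\{\hat r,\hat c\}$ be an ordered sub-pair of $\{r,c\}$ of length $p+1$, with strictly increasing index sequences $\alpha=[\alpha_0,\ldots,\alpha_p]\subseteq\{0,\ldots,m\}$ and $\beta=[\beta_0,\ldots,\beta_p]\subseteq\{0,\ldots,n\}$ such that $\hat r_i=r_{\alpha_i}$ and $\hat c_i=c_{\beta_i}$. Let $I_{\hat r,\hat c}$ be the $(m+1)\times(n+1)$ matrix (rows and columns indexed from $0$) with entry $1$ at positions $(\alpha_i,\beta_i)$ for $i=0,\ldots,p$ and all other entries $0$. Then $\operatorname{rank}(T_{\hat r,\hat c})=\operatorname{rank}(I_{\hat r,\hat c})=p+1$. If moreover $\{\hat r,\hat c\}$ is maximal, then $\operatorname{rank}(T_{r,c})=\operatorname{rank}(I_{\hat r,\hat c})$.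
   Context: The Pascal upper triangular matrix is the infinite matrix $T=(T_{i,j})_{i,j\ge 0}$ with $T_{i,j}=\binom{j}{i}$, where $\binom{j}{i}:=0$ if $i>j$ (rows and columns indexed from $0$). A selection of rows (resp. columns) is a strictly increasing finite sequence of nonnegative integers. For selections $r=[r_0,\ldots,r_m]$ and $c=[c_0,\ldots,c_n]$, $T_{r,c}$ denotes the $(m+1)\times(n+1)$ matrix whose $(i,j)$ entry is $\binom{c_j}{r_i}$. A pair $\{\hat r,\hat c\}$ is an ordered sub-pair of $\{r,c\}$ of length $p+1$ if $\hat r=[\hat r_0,\ldots,\hat r_p]$ is a subsequence of $r$, $\hat c=[\hat c_0,\ldots,\hat c_p]$ is a subsequence of $c$, and $\hat r_i\le \hat c_i$ for all $i=0,\ldots,p$ (the empty pair has length $0$). It is maximal if no ordered sub-pair of $\{r,c\}$ has length greater than $p+1$. *)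

theory Defs
  imports "Jordan_Normal_Form.DL_Rank"
begin

definition mrank :: "real mat \<Rightarrow> nat" where
  "mrank A = vec_space.rank (dim_row A) A"

definition selection :: "nat list \<Rightarrow> bool" where
  "selection s \<longleftrightarrow> sorted_wrt (<) s"

definition pascal_sub :: "nat list \<Rightarrow> nat list \<Rightarrow> real mat" where
  "pascal_sub r c = mat (length r) (length c) (\<lambda>(i,j). real ((c ! j) choose (r ! i)))"

definition ordered_subpair_idx :: "nat list \<Rightarrow> nat list \<Rightarrow> nat list \<Rightarrow> nat list \<Rightarrow> bool" where
  "ordered_subpair_idx r c \<alpha> \<beta> \<longleftrightarrow>
     length \<alpha> = length \<beta> \<and>
     sorted_wrt (<) \<alpha> \<and> sorted_wrt (<) \<beta> \<and>
     (\<forall>k\<in>set \<alpha>. k < length r) \<and> (\<forall>k\<in>set \<beta>. k < length c) \<and>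
     (\<forall>i<length \<alpha>. r ! (\<alpha> ! i) \<le> c ! (\<beta> ! i))"

definition maximal_subpair_idx :: "nat list \<Rightarrow> nat list \<Rightarrow> nat list \<Rightarrow> nat list \<Rightarrow> bool" where
  "maximal_subpair_idx r c \<alpha> \<beta> \<longleftrightarrow>
     ordered_subpair_idx r c \<alpha> \<beta> \<and>
     (\<forall>\<alpha>' \<beta>'. ordered_subpair_idx r c \<alpha>' \<beta>' \<longrightarrow> length \<alpha>' \<le> length \<alpha>)"

definition I_mat :: "nat list \<Rightarrow> nat list \<Rightarrow> nat list \<Rightarrow> nat list \<Rightarrow> real mat" where
  "I_mat r c \<alpha> \<beta> = mat (length r) (length c)
     (\<lambda>(i,j). if \<exists>k<length \<alpha>. \<alpha> ! k = i \<and> \<beta> ! k = j then 1 else 0)"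

end

theory Submission
  imports Defs "Jordan_Normal_Form.DL_Rank_Submatrix"
begin


definition Gm :: "nat list \<Rightarrow> nat list \<Rightarrow> nat list \<Rightarrow> real mat" where
  "Gm R A B = mat (length A) (length R) (\<lambda>(i,j). \<Sum>t\<in>{A!i..<B!i}. real (t choose (R!j)))"

definition ivs :: "nat list \<Rightarrow> nat list \<Rightarrow> bool" where
  "ivs A B \<longleftrightarrow> length A = length B \<and> (\<forall>i<length A. A!i < B!i) \<and>
     (\<forall>i. Suc i < length A \<longrightarrow> B!i \<le> A!Suc i)"

lemma Gm_carrier: "Gm R A B \<in> carrier_mat (length A) (length R)"
  unfolding Gm_def by simp

lemma Gm_index: "i < length A \<Longrightarrow> j < length R \<Longrightarrow>
   Gm R A B $$ (i,j) = (\<Sum>t\<in>{A!i..<B!i}. real (t choose (R!j)))"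
  unfolding Gm_def by simp

lemma prod_list_pos: "(\<forall>x\<in>set xs. x > 0) \<Longrightarrow> prod_list xs > (0::real)"
  by (induction xs) auto

lemma hockey:
  assumes "a \<le> b"
  shows "real (b choose Suc r) - real (a choose Suc r) = (\<Sum>t\<in>{a..<b}. real (t choose r))"
  using assms
proof (induction b rule: dec_induct)
  case base then show ?case by simp
next
  case (step b)
  have "real (Suc b choose Suc r) = real (b choose r) + real (b choose Suc r)" by simp
  moreover have "(\<Sum>t\<in>{a..<Suc b}. real (t choose r)) = (\<Sum>t\<in>{a..<b}. real (t choose r)) + real (b choose r)"
    using step.hyps by simp
  ultimately show ?case using step.IH by simp
qed

lemma det_split:
  assumes i: "i < length A" and lenR: "length R = length A" and lenB: "length B = length A" and ab: "A!i < b" and b: "b < B!i"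
  shows "det (Gm R A B) = det (Gm R A (B[i := b])) + det (Gm R (A[i := b]) B)"
proof -
  let ?q = "length A"
  define va where "va = vec ?q (\<lambda>j. \<Sum>t\<in>{A!i..<b}. real (t choose (R!j)))"
  define vb where "vb = vec ?q (\<lambda>j. \<Sum>t\<in>{b..<B!i}. real (t choose (R!j)))"
  define c where "c = (\<lambda>k. row (Gm R A B) k)"
  have e: "det (mat\<^sub>r ?q ?q (\<lambda>k. if k = i then (\<lambda>_. va) k + (\<lambda>_. vb) k else c k)) =
    det (mat\<^sub>r ?q ?q (\<lambda>k. if k = i then (\<lambda>_. va) k else c k)) +
    det (mat\<^sub>r ?q ?q (\<lambda>k. if k = i then (\<lambda>_. vb) k else c k))"
    by (rule det_row_add) (auto simp: va_def vb_def c_def i lenR Gm_def)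
  have 1: "Gm R A B = mat\<^sub>r ?q ?q (\<lambda>k. if k = i then (\<lambda>_. va) k + (\<lambda>_. vb) k else c k)"
  proof (rule eq_matI)
    fix k j assume k: "k < dim_row (mat\<^sub>r ?q ?q (\<lambda>k. if k = i then (\<lambda>_. va) k + (\<lambda>_. vb) k else c k))"
      and j: "j < dim_col (mat\<^sub>r ?q ?q (\<lambda>k. if k = i then (\<lambda>_. va) k + (\<lambda>_. vb) k else c k))"
    have "(\<Sum>t\<in>{A!i..<B!i}. real (t choose (R!j))) = (\<Sum>t\<in>{A!i..<b}. real (t choose (R!j))) + (\<Sum>t\<in>{b..<B!i}. real (t choose (R!j)))"
      using ab b by (simp add: sum.atLeastLessThan_concat)
    then show "Gm R A B $$ (k, j) = mat\<^sub>r ?q ?q (\<lambda>k. if k = i then (\<lambda>_. va) k + (\<lambda>_. vb) k else c k) $$ (k, j)"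
      using k j lenR by (auto simp: Gm_def va_def vb_def c_def)
  qed (auto simp: Gm_def lenR)
  have 2: "Gm R A (B[i := b]) = mat\<^sub>r ?q ?q (\<lambda>k. if k = i then (\<lambda>_. va) k else c k)"
    by (rule eq_matI) (auto simp: Gm_def va_def c_def lenR i lenB)
  have 3: "Gm R (A[i := b]) B = mat\<^sub>r ?q ?q (\<lambda>k. if k = i then (\<lambda>_. vb) k else c k)"
    by (rule eq_matI) (auto simp: Gm_def vb_def c_def lenR i lenB)
  show ?thesis using e 1 2 3 by simp
qed

lemma sum_bidiag:
  assumes "i < (n::nat)"
  shows "(\<Sum>k\<in>{0..<n}. (if i = k then 1 else if i = Suc k then -1 else 0) * (g k::real))
       = g i - (if 0 < i then g (i - 1) else 0)"
proof -
  have "(\<Sum>k\<in>{0..<n}. (if i = k then 1 else if i = Suc k then -1 else 0) * g k)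
      = (\<Sum>k\<in>{0..<n}. (if k = i then g k else 0) - (if k = i - 1 \<and> 0 < i then g k else 0))"
    by (rule sum.cong) auto
  also have "\<dots> = (\<Sum>k\<in>{0..<n}. (if k = i then g k else 0)) - (\<Sum>k\<in>{0..<n}. (if k = i - 1 \<and> 0 < i then g k else 0))"
    by (rule sum_subtractf)
  also have "\<dots> = g i - (if 0 < i then g (i - 1) else 0)"
    using assms by (cases "0 < i") auto
  finally show ?thesis .
qed

lemma det_diff:
  assumes lA: "length A = Suc q" and lR: "length R = Suc q" and lB: "length B = Suc q"
    and unit: "\<forall>i<Suc q. B!i = Suc (A!i)" and R0: "R!0 = 0" and sR: "sorted_wrt (<) R"
    and sA: "\<forall>i. Suc i < Suc q \<longrightarrow> A!i \<le> A!(Suc i)"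
  shows "det (Gm R A B) = det (Gm (map (\<lambda>r. r - 1) (tl R)) (butlast A) (tl A))"
proof -
  let ?n = "Suc q"
  define G where "G = Gm R A B"
  define L :: "real mat" where "L = mat ?n ?n (\<lambda>(i,j). if i = j then 1 else if i = Suc j then -1 else 0)"
  have G: "G \<in> carrier_mat ?n ?n" unfolding G_def using Gm_carrier[of R A B] lA lR by simp
  have Lc: "L \<in> carrier_mat ?n ?n" unfolding L_def by simp
  have LG: "(L * G) $$ (i,j) = G $$ (i,j) - (if 0 < i then G $$ (i - 1, j) else 0)"
    if "i < ?n" "j < ?n" for i j
  proof -
    have "(L * G) $$ (i,j) = (\<Sum>k\<in>{0..<?n}. (if i = k then 1 else if i = Suc k then -1 else 0) * G $$ (k,j))"
      using that G by (simp add: L_def scalar_prod_def)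
    also have "\<dots> = G $$ (i,j) - (if 0 < i then G $$ (i - 1, j) else 0)"
      by (rule sum_bidiag[OF that(1)])
    finally show ?thesis .
  qed
  have dL: "det L = 1"
  proof -
    have "det L = prod_list (diag_mat L)"
      by (rule det_lower_triangular[OF _ Lc]) (auto simp: L_def)
    also have "diag_mat L = map (\<lambda>_. 1) [0..<?n]" by (auto simp: diag_mat_def L_def)
    finally show ?thesis by (simp add: map_replicate_const)
  qed
  have LGc: "L * G \<in> carrier_mat ?n ?n" using Lc G by simp
  have "det (L * G) = det L * det G" by (rule det_mult[OF Lc G])
  then have d1: "det G = det (L * G)" using dL by simp
  have col0: "(L * G) $$ (i, 0) = (if i = 0 then 1 else 0)" if "i < ?n" for i
  proof -
    have "G $$ (k, 0) = 1" if "k < ?n" for k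
      using that lA lR unit R0 by (simp add: G_def Gm_index)
    then show ?thesis using LG[OF that] that by auto
  qed
  have "det (L * G) = (\<Sum>i<?n. (L * G) $$ (i,0) * cofactor (L * G) i 0)"
    by (rule laplace_expansion_column[OF LGc]) simp
  also have "\<dots> = (\<Sum>i<?n. (if i = 0 then cofactor (L * G) i 0 else 0))"
    by (rule sum.cong) (auto simp: col0)
  also have "\<dots> = cofactor (L * G) 0 0" by simp
  also have "\<dots> = det (mat_delete (L * G) 0 0)" by (simp add: cofactor_def)
  also have "mat_delete (L * G) 0 0 = Gm (map (\<lambda>r. r - 1) (tl R)) (butlast A) (tl A)"
  proof (rule eq_matI)
    fix i j assume i: "i < dim_row (Gm (map (\<lambda>r. r - 1) (tl R)) (butlast A) (tl A))"
      and j: "j < dim_col (Gm (map (\<lambda>r. r - 1) (tl R)) (butlast A) (tl A))"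
    have i': "i < q" and j': "j < q" using i j lA lR by (auto simp: Gm_def)
    have "mat_delete (L * G) 0 0 $$ (i, j) = (L * G) $$ (Suc i, Suc j)"
      using i' j' Lc G by (simp add: mat_delete_def)
    also have "\<dots> = G $$ (Suc i, Suc j) - G $$ (i, Suc j)" using LG[of "Suc i" "Suc j"] i' j' by simp
    also have "\<dots> = real (A ! Suc i choose R ! Suc j) - real (A ! i choose R ! Suc j)"
      using i' j' lA lR unit by (simp add: G_def Gm_index)
    also have "\<dots> = (\<Sum>t\<in>{A!i..<A!Suc i}. real (t choose (R ! Suc j - 1)))"
    proof -
      have "R ! 0 < R ! Suc j" using sR j' lR by (simp add: sorted_wrt_nth_less)
      then have e: "R ! Suc j = Suc (R ! Suc j - 1)" using R0 by simp
      show ?thesis by (subst (1 2) e, rule hockey) (use sA i' in auto)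
    qed
    also have "\<dots> = Gm (map (\<lambda>r. r - 1) (tl R)) (butlast A) (tl A) $$ (i, j)"
      using i' j' lA lR by (simp add: Gm_index nth_butlast nth_tl)
    finally show "mat_delete (L * G) 0 0 $$ (i, j) = Gm (map (\<lambda>r. r - 1) (tl R)) (butlast A) (tl A) $$ (i, j)" .
  qed (use lA lR LGc in \<open>auto simp: Gm_def\<close>)
  finally show ?thesis using d1 G_def by simp
qed

lemma det_zero_row:
  assumes lA: "length A = Suc q" and lR: "length R = Suc q" and lB: "length B = Suc q"
    and unit: "\<forall>i<Suc q. B!i = Suc (A!i)" and R0: "R!0 \<ge> 1" and sR: "sorted_wrt (<) R"
    and A0: "A!0 = 0"
  shows "det (Gm R A B) = 0"
proof -
  have Gc: "Gm R A B \<in> carrier_mat (Suc q) (Suc q)" using Gm_carrier[of R A B] lA lR by simp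
  have z: "Gm R A B $$ (0, j) = 0" if "j < Suc q" for j
  proof -
    have "R!0 \<le> R!j" using sR that lR by (cases j) (auto simp: sorted_wrt_nth_less less_imp_le)
    then show ?thesis using that lA lR unit A0 R0 by (simp add: Gm_index)
  qed
  have "det (Gm R A B) = (\<Sum>j<Suc q. Gm R A B $$ (0,j) * cofactor (Gm R A B) 0 j)"
    by (rule laplace_expansion_row[OF Gc]) simp
  also have "\<dots> = 0" by (simp add: z)
  finally show ?thesis .
qed

lemma diag_left:
  assumes "M \<in> carrier_mat n m" "i < n" "j < m"
  shows "(mat n n (\<lambda>(i,j). if i = j then x i else 0) * M) $$ (i,j) = x i * M $$ (i,j)"
proof -
  have "(mat n n (\<lambda>(i,j). if i = j then x i else 0) * M) $$ (i,j)
     = (\<Sum>k\<in>{0..<n}. (if i = k then x i else 0) * M $$ (k,j))"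
    using assms by (simp add: scalar_prod_def)
  also have "\<dots> = (\<Sum>k\<in>{0..<n}. if k = i then x i * M $$ (i,j) else 0)"
    by (rule sum.cong) auto
  finally show ?thesis using assms by simp
qed

lemma diag_right:
  assumes "M \<in> carrier_mat n m" "i < n" "j < m"
  shows "(M * mat m m (\<lambda>(i,j). if i = j then y i else 0)) $$ (i,j) = M $$ (i,j) * y j"
proof -
  have "(M * mat m m (\<lambda>(i,j). if i = j then y i else 0)) $$ (i,j)
     = (\<Sum>k\<in>{0..<m}. M $$ (i,k) * (if k = j then y j else 0))"
    using assms by (auto simp: scalar_prod_def intro!: sum.cong)
  also have "\<dots> = (\<Sum>k\<in>{0..<m}. if k = j then M $$ (i,j) * y j else 0)"
    by (rule sum.cong) auto
  finally show ?thesis using assms by simp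
qed

lemma det_diag_pos:
  assumes "\<forall>i<n. x i > (0::real)"
  shows "det (mat n n (\<lambda>(i,j). if i = j then x i else 0)) > 0"
proof -
  have "det (mat n n (\<lambda>(i,j). if i = j then x i else 0)) = prod_list (diag_mat (mat n n (\<lambda>(i,j). if i = j then x i else 0)))"
    by (rule det_lower_triangular[of n]) auto
  also have "\<dots> > 0" using assms by (intro prod_list_pos) (auto simp: diag_mat_def)
  finally show ?thesis .
qed

lemma sum_single: "1 \<le> (a::nat) \<Longrightarrow> (\<Sum>t\<in>{a - 1..<a}. f t) = f (a - 1)"
  by (cases a) auto

lemma choose_shift:
  assumes "1 \<le> a" "1 \<le> r"
  shows "real (a choose r) = real a * real ((a - 1) choose (r - 1)) * (1 / real r)"
proof -
  obtain a' r' where a: "a = Suc a'" and r: "r = Suc r'" using assms by (metis Suc_le_D One_nat_def)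
  have "real (Suc a' * (a' choose r')) = real ((Suc a' choose Suc r') * Suc r')"
    by (simp only: Suc_times_binomial_eq)
  then have "real (Suc a') * real (a' choose r') = real (Suc a' choose Suc r') * real (Suc r')"
    by (simp only: of_nat_mult)
  then show ?thesis unfolding a r by (simp add: field_simps)
qed

lemma det_scale:
  assumes lA: "length A = n" and lR: "length R = n" and lB: "length B = n"
    and unit: "\<forall>i<n. B!i = Suc (A!i)" and Rp: "\<forall>j<n. R!j \<ge> 1" and Ap: "\<forall>i<n. A!i \<ge> 1"
  shows "\<exists>c>0. det (Gm R A B) = c * det (Gm (map (\<lambda>r. r - 1) R) (map (\<lambda>a. a - 1) A) (map (\<lambda>b. b - 1) B))"
proof -
  define G' where "G' = Gm (map (\<lambda>r. r - 1) R) (map (\<lambda>a. a - 1) A) (map (\<lambda>b. b - 1) B)"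
  define Dx :: "real mat" where "Dx = mat n n (\<lambda>(i,j). if i = j then real (A!i) else 0)"
  define Dy :: "real mat" where "Dy = mat n n (\<lambda>(i,j). if i = j then 1 / real (R!i) else 0)"
  have G'c: "G' \<in> carrier_mat n n" using Gm_carrier lA lR unfolding G'_def by (metis length_map)
  have Dxc: "Dx \<in> carrier_mat n n" and Dyc: "Dy \<in> carrier_mat n n" by (auto simp: Dx_def Dy_def)
  have eq: "Gm R A B = Dx * G' * Dy"
  proof (rule eq_matI)
    fix i j assume "i < dim_row (Dx * G' * Dy)" "j < dim_col (Dx * G' * Dy)"
    then have i: "i < n" and j: "j < n" using Dxc Dyc by auto
    have "(Dx * G' * Dy) $$ (i,j) = (Dx * G') $$ (i,j) * (1 / real (R!j))"
      unfolding Dy_def by (rule diag_right[OF _ i j]) (use Dxc G'c in simp)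
    also have "(Dx * G') $$ (i,j) = real (A!i) * G' $$ (i,j)"
      unfolding Dx_def by (rule diag_left[OF G'c i j])
    also have "G' $$ (i,j) = real ((A!i - 1) choose (R!j - 1))"
      using i j lA lR lB unit Ap sum_single[of "A!i" "\<lambda>t. real (t choose (R!j - 1))"] by (simp add: G'_def Gm_index)
    finally have "(Dx * G' * Dy) $$ (i,j) = real (A!i) * real ((A!i - 1) choose (R!j - 1)) * (1 / real (R!j))" .
    also have "\<dots> = real (A!i choose R!j)" using choose_shift Ap Rp i j by simp
    also have "\<dots> = Gm R A B $$ (i,j)" using i j lA lR unit by (simp add: Gm_index)
    finally show "Gm R A B $$ (i,j) = (Dx * G' * Dy) $$ (i,j)" by simp
  qed (use Dxc Dyc lA lR in \<open>auto simp: Gm_def\<close>)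
  have "det (Dx * G' * Dy) = det (Dx * G') * det Dy"
    by (rule det_mult) (use Dxc G'c Dyc in auto)
  also have "det (Dx * G') = det Dx * det G'" by (rule det_mult[OF Dxc G'c])
  finally have "det (Gm R A B) = (det Dx * det Dy) * det G'" using eq by simp
  moreover have "det Dx * det Dy > 0"
    unfolding Dx_def Dy_def using Ap Rp by (intro mult_pos_pos det_diag_pos) auto
  ultimately show ?thesis unfolding G'_def by blast
qed

lemma ivs_mono:
  assumes "ivs A B" "i \<le> j" "j < length A"
  shows "A!i \<le> A!j"
  using assms(2,3)
proof (induction j rule: dec_induct)
  case base then show ?case by simp
next
  case (step j)
  have "A!j < B!j" "B!j \<le> A!Suc j" using assms(1) step by (auto simp: ivs_def)
  then show ?case using step by simp
qed

lemma sorted_nth_mono: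
  assumes "sorted_wrt (<) (R::nat list)" "i \<le> j" "j < length R"
  shows "R!i \<le> R!j"
  using assms sorted_wrt_nth_less[of "(<)" R i j] by (cases "i = j") auto

definition mu :: "nat list \<Rightarrow> nat list \<Rightarrow> nat list \<Rightarrow> nat" where
  "mu R A B = (\<Sum>i<length A. B!i - A!i) + (\<Sum>j<length R. R!j)"

lemma Gm_TN:
  "length R = q \<Longrightarrow> sorted_wrt (<) R \<Longrightarrow> length A = q \<Longrightarrow> ivs A B \<Longrightarrow>
   det (Gm R A B) \<ge> 0 \<and> ((\<forall>j<q. R!j < B!j) \<longrightarrow> det (Gm R A B) > 0)"
proof (induction q arbitrary: R A B)
  case 0
  have "Gm R A B \<in> carrier_mat 0 0" using Gm_carrier[of R A B] 0 by simp
  then show ?case by simp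
next
  case (Suc q)
  have main: "\<And>R A B. mu R A B = k \<Longrightarrow> length R = Suc q \<Longrightarrow> sorted_wrt (<) R \<Longrightarrow> length A = Suc q \<Longrightarrow> ivs A B \<Longrightarrow>
   det (Gm R A B) \<ge> 0 \<and> ((\<forall>j<Suc q. R!j < B!j) \<longrightarrow> det (Gm R A B) > 0)" for k
  proof (induction k rule: less_induct)
    case (less k R A B)
    note IH2 = less.IH[OF _ refl]
    have lR: "length R = Suc q" and sR: "sorted_wrt (<) R" and lA: "length A = Suc q" and iv: "ivs A B"
      using less.prems by auto
    have lB: "length B = Suc q" and AB: "\<forall>i<Suc q. A!i < B!i" and BA: "\<forall>i. Suc i < Suc q \<longrightarrow> B!i \<le> A!Suc i"
      using iv lA by (auto simp: ivs_def)
    show ?case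
    proof (cases "\<exists>i<Suc q. Suc (A!i) < B!i")
      case True
      then obtain i where i: "i < Suc q" and long: "Suc (A!i) < B!i" by blast
      define b where "b = B!i - 1"
      have ab: "A!i < b" and bB: "b < B!i" using long unfolding b_def by auto
      have split: "det (Gm R A B) = det (Gm R A (B[i := b])) + det (Gm R (A[i := b]) B)"
        by (rule det_split) (use i lA lR lB ab bB in auto)
      have iv1: "ivs A (B[i := b])"
        unfolding ivs_def
      proof (intro conjI allI impI)
        fix k assume k: "k < length A"
        show "A!k < B[i := b]!k" using k AB lA lB ab by (cases "k = i") auto
      next
        fix k assume k: "Suc k < length A"
        show "B[i := b]!k \<le> A!Suc k" using k BA lA lB bB by (cases "k = i") auto
      qed (use lA lB in simp)
      have iv2: "ivs (A[i := b]) B"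
        unfolding ivs_def
      proof (intro conjI allI impI)
        fix k assume k: "k < length (A[i := b])"
        show "A[i := b]!k < B!k" using k AB lA lB bB by (cases "k = i") auto
      next
        fix k assume k: "Suc k < length (A[i := b])"
        show "B!k \<le> A[i := b]!Suc k"
        proof (cases "Suc k = i")
          case True
          then show ?thesis using k BA lA ab by auto
        next
          case False
          then show ?thesis using k BA lA by auto
        qed
      qed (use lA lB in simp)
      have m1: "mu R A (B[i := b]) < mu R A B"
      proof -
        have "(\<Sum>k<length A. B[i := b]!k - A!k) < (\<Sum>k<length A. B!k - A!k)"
        proof (rule sum_strict_mono_ex1)
          show "\<forall>x\<in>{..<length A}. B[i := b] ! x - A ! x \<le> B ! x - A ! x"
          proof
            fix x assume "x \<in> {..<length A}"
            then show "B[i := b] ! x - A ! x \<le> B ! x - A ! x" using bB lA lB by (cases "x = i") auto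
          qed
          show "\<exists>a\<in>{..<length A}. B[i := b] ! a - A ! a < B ! a - A ! a"
            using i lA lB ab bB by (intro bexI[of _ i]) auto
        qed simp
        then show ?thesis unfolding mu_def by simp
      qed
      have m2: "mu R (A[i := b]) B < mu R A B"
      proof -
        have "(\<Sum>k<length A. B!k - A[i := b]!k) < (\<Sum>k<length A. B!k - A!k)"
        proof (rule sum_strict_mono_ex1)
          show "\<forall>x\<in>{..<length A}. B ! x - A[i := b] ! x \<le> B ! x - A ! x"
          proof
            fix x assume "x \<in> {..<length A}"
            then show "B ! x - A[i := b] ! x \<le> B ! x - A ! x" using ab lA lB by (cases "x = i") auto
          qed
          show "\<exists>a\<in>{..<length A}. B ! a - A[i := b] ! a < B ! a - A ! a"
            using i lA lB ab bB by (intro bexI[of _ i]) auto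
        qed simp
        then show ?thesis unfolding mu_def by simp
      qed
      note r1 = IH2[OF m1[unfolded less.prems(1)] lR sR lA iv1]
      note r2 = IH2[OF m2[unfolded less.prems(1)] lR sR _ iv2]
      show ?thesis using r1 r2 split lA by auto
    next
      case False
      have unit: "\<forall>i<Suc q. B!i = Suc (A!i)"
        using False AB by (metis Suc_lessI)
      have sA: "\<forall>i. Suc i < Suc q \<longrightarrow> A!i \<le> A!(Suc i)"
      proof (intro allI impI)
        fix i assume i: "Suc i < Suc q"
        then have "B!i = Suc (A!i)" "B!i \<le> A!Suc i" using unit BA by auto
        then show "A!i \<le> A!(Suc i)" by simp
      qed
      show ?thesis
      proof (cases "R!0 = 0")
        case R0: True
        define R' where "R' = map (\<lambda>r. r - 1) (tl R)"
        define A' where "A' = butlast A"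
        define B' where "B' = tl A"
        have d: "det (Gm R A B) = det (Gm R' A' B')"
          unfolding R'_def A'_def B'_def by (rule det_diff[OF lA lR lB unit R0 sR sA])
        have lR': "length R' = q" and lA': "length A' = q" and lB': "length B' = q"
          using lR lA by (auto simp: R'_def A'_def B'_def)
        have Rpos: "R!(Suc j) > 0" if "j < q" for j
          using sR that lR R0 sorted_wrt_nth_less[of "(<)" R 0 "Suc j"] by auto
        have sR': "sorted_wrt (<) R'"
          unfolding sorted_wrt_iff_nth_less
        proof (intro allI impI)
          fix i j assume ij: "i < j" "j < length R'"
          then have "R!(Suc i) < R!(Suc j)" using sR lR lR' by (simp add: sorted_wrt_nth_less)
          then show "R'!i < R'!j" using ij lR lR' Rpos[of i] by (simp add: R'_def nth_tl)
        qed
        have iv': "ivs A' B'"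
          unfolding ivs_def
        proof (intro conjI allI impI)
          fix k assume k: "k < length A'"
          then have k': "Suc k < Suc q" using lA lA' by simp
          then have "B!k = Suc (A!k)" "B!k \<le> A!Suc k" using unit BA by auto
          then have "Suc (A!k) \<le> A!Suc k" by simp
          then show "A'!k < B'!k" using k lA lA' by (simp add: A'_def B'_def nth_butlast nth_tl)
        next
          fix k assume k: "Suc k < length A'"
          then show "B'!k \<le> A'!Suc k" using lA lA' by (simp add: A'_def B'_def nth_butlast nth_tl)
        qed (use lA' lB' in simp)
        note res = Suc.IH[OF lR' sR' lA' iv']
        have pos: "\<forall>j<q. R'!j < B'!j" if "\<forall>j<Suc q. R!j < B!j"
        proof (intro allI impI)
          fix j assume j: "j < q"
          then have "R!(Suc j) < Suc (A!Suc j)" using that unit by auto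
          then show "R'!j < B'!j" using j lR lA Rpos[OF j] by (simp add: R'_def B'_def nth_tl)
        qed
        show ?thesis using res d pos by auto
      next
        case R0: False
        show ?thesis
        proof (cases "A!0 = 0")
          case A0: True
          have "det (Gm R A B) = 0"
            by (rule det_zero_row[OF lA lR lB unit _ sR A0]) (use R0 in simp)
          moreover have "\<not> (\<forall>j<Suc q. R!j < B!j)" using R0 A0 unit by auto
          ultimately show ?thesis by simp
        next
          case A0: False
          have Rp: "\<forall>j<Suc q. R!j \<ge> 1"
          proof (intro allI impI)
            fix j assume "j < Suc q"
            then have "R!0 \<le> R!j" using sorted_nth_mono[OF sR, of 0 j] lR by simp
            then show "R!j \<ge> 1" using R0 by simp
          qed
          have Ap: "\<forall>i<Suc q. A!i \<ge> 1"
          proof (intro allI impI)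
            fix j assume "j < Suc q"
            then have "A!0 \<le> A!j" using ivs_mono[OF iv, of 0 j] lA by simp
            then show "A!j \<ge> 1" using A0 by simp
          qed
          define R'' where "R'' = map (\<lambda>r. r - 1) R"
          define A'' where "A'' = map (\<lambda>a. a - 1) A"
          define B'' where "B'' = map (\<lambda>b. b - 1) B"
          obtain c where c: "c > 0" and d: "det (Gm R A B) = c * det (Gm R'' A'' B'')"
            using det_scale[OF lA lR lB unit Rp Ap] unfolding R''_def A''_def B''_def by blast
          have lR'': "length R'' = Suc q" and lA'': "length A'' = Suc q" and lB'': "length B'' = Suc q"
            using lR lA lB by (auto simp: R''_def A''_def B''_def)
          have sR'': "sorted_wrt (<) R''"
            unfolding sorted_wrt_iff_nth_less
          proof (intro allI impI)
            fix i j assume ij: "i < j" "j < length R''"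
            then have "R!i < R!j" using sR lR lR'' by (simp add: sorted_wrt_nth_less)
            moreover have "R!i \<ge> 1" using Rp ij lR lR'' by simp
            ultimately show "R''!i < R''!j" using ij lR lR'' by (simp add: R''_def)
          qed
          have iv'': "ivs A'' B''"
            unfolding ivs_def
          proof (intro conjI allI impI)
            fix k assume k: "k < length A''"
            then have k': "k < Suc q" using lA lA'' by simp
            then have "A!k < B!k" "A!k \<ge> 1" using AB Ap by auto
            then show "A''!k < B''!k" using k' lA lB by (simp add: A''_def B''_def)
          next
            fix k assume k: "Suc k < length A''"
            then show "B''!k \<le> A''!Suc k" using BA lA lB lA'' by (simp add: A''_def B''_def diff_le_mono)
          qed (use lA'' lB'' in simp)
          have m: "mu R'' A'' B'' < mu R A B"
          proof -
            have e1: "(\<Sum>i<length A''. B''!i - A''!i) = (\<Sum>i<length A. B!i - A!i)"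
              using lA lA'' lB Ap by (intro sum.cong) (auto simp: A''_def B''_def)
            have "(\<Sum>j<length R''. R''!j) < (\<Sum>j<length R. R!j)"
              unfolding lR'' lR
            proof (rule sum_strict_mono_ex1)
              show "\<forall>x\<in>{..<Suc q}. R'' ! x \<le> R ! x" using lR by (auto simp: R''_def)
              show "\<exists>a\<in>{..<Suc q}. R'' ! a < R ! a" using lR R0 by (intro bexI[of _ 0]) (auto simp: R''_def)
            qed simp
            then show ?thesis using e1 unfolding mu_def by simp
          qed
          note res = IH2[OF m[unfolded less.prems(1)] lR'' sR'' lA'' iv'']
          have pos: "\<forall>j<Suc q. R''!j < B''!j" if "\<forall>j<Suc q. R!j < B!j"
          proof (intro allI impI)
            fix j assume j: "j < Suc q"
            then have "R!j < B!j" "R!j \<ge> 1" using that Rp by auto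
            then show "R''!j < B''!j" using j lR lB by (simp add: R''_def B''_def)
          qed
          show ?thesis using res d c pos by (auto intro: mult_pos_pos)
        qed
      qed
    qed
  qed
  show ?case using main[OF refl] Suc.prems by blast
qed



lemma rank_sum_rank1:
  fixes A :: "real mat"
  assumes "A \<in> carrier_mat n nc"
    and "\<And>i j. i < n \<Longrightarrow> j < nc \<Longrightarrow> A $$ (i,j) = (\<Sum>l<K. f l i * g l j)"
  shows "vec_space.rank n A \<le> K"
  using assms
proof (induction K arbitrary: A)
  case 0
  have "A = 0\<^sub>m n nc" using 0 by (intro eq_matI) auto
  then show ?case using vec_space.rank_0I by simp
next
  case (Suc K)
  define A1 where "A1 = mat n nc (\<lambda>(i,j). (\<Sum>l<K. f l i * g l j))"
  define A2 where "A2 = mat n nc (\<lambda>(i,j). f K i * g K j)"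
  have c1: "A1 \<in> carrier_mat n nc" and c2: "A2 \<in> carrier_mat n nc" unfolding A1_def A2_def by auto
  have "A = A1 + A2" using Suc.prems unfolding A1_def A2_def by (intro eq_matI) auto
  moreover have "vec_space.rank n A1 \<le> K" by (rule Suc.IH[OF c1]) (simp add: A1_def)
  moreover have "vec_space.rank n A2 \<le> 1"
    by (rule vec_space.rank_le_1_product_entries[OF c2, of "f K" "g K"]) (simp add: A2_def)
  moreover have "vec_space.rank n (A1 + A2) \<le> vec_space.rank n A1 + vec_space.rank n A2"
    by (rule vec_space.rank_subadditive[OF c1 c2])
  ultimately show ?case by simp
qed

lemma pick_sorted:
  assumes "sorted_wrt (<) xs" "i < length xs"
  shows "pick (set xs) i = xs ! i"
  using assms(2)
proof (induction i)
  case 0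
  show ?case unfolding pick.simps
  proof (rule Least_equality)
    show "xs ! 0 \<in> set xs" using 0 by simp
    fix a assume "a \<in> set xs"
    then obtain k where "k < length xs" "a = xs ! k" by (auto simp: in_set_conv_nth)
    then show "xs ! 0 \<le> a" using assms(1)
      by (metis le_less not_gr_zero sorted_wrt_nth_less)
  qed
next
  case (Suc i)
  show ?case unfolding pick.simps Suc.IH[OF Suc_lessD[OF Suc.prems]]
  proof (rule Least_equality)
    show "xs ! Suc i \<in> set xs \<and> xs ! i < xs ! Suc i" using Suc.prems assms(1)
      by (simp add: sorted_wrt_nth_less)
    fix a assume "a \<in> set xs \<and> xs ! i < a"
    then obtain k where k: "k < length xs" "a = xs ! k" "xs ! i < a" by (auto simp: in_set_conv_nth)
    have "i < k" using k assms(1) Suc.prems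
      by (metis Suc_lessD linorder_neqE_nat not_less_iff_gr_or_eq sorted_wrt_nth_less)
    then show "xs ! Suc i \<le> a" using k assms(1)
      by (metis Suc_leI le_less sorted_wrt_nth_less)
  qed
qed

lemma sorted_inj:
  assumes "sorted_wrt (<) (xs::nat list)" "i < length xs" "j < length xs" "xs!i = xs!j"
  shows "i = j"
  using assms sorted_wrt_nth_less[of "(<)" xs i j] sorted_wrt_nth_less[of "(<)" xs j i]
  by (cases i j rule: linorder_cases) auto

lemma pascal_index: "i < length r \<Longrightarrow> j < length c \<Longrightarrow> pascal_sub r c $$ (i,j) = real (c!j choose r!i)"
  unfolding pascal_sub_def by simp

lemma pascal_det_pos:
  assumes sR: "sorted_wrt (<) R" and sC: "sorted_wrt (<) C" and l: "length R = length C"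
    and le: "\<forall>i<length R. R!i \<le> C!i"
  shows "det (pascal_sub R C) > 0"
proof -
  let ?q = "length R"
  have eq: "pascal_sub R C = (Gm R C (map Suc C))\<^sup>T"
    by (rule eq_matI) (use l in \<open>auto simp: pascal_sub_def Gm_def\<close>)
  have iv: "ivs C (map Suc C)"
    unfolding ivs_def
  proof (intro conjI allI impI)
    fix i assume "Suc i < length C"
    then show "map Suc C ! i \<le> C ! Suc i" using sC by (simp add: sorted_wrt_nth_less Suc_leI)
  qed auto
  have "det (Gm R C (map Suc C)) > 0"
    using Gm_TN[OF refl sR l[symmetric] iv] le l by (auto simp: le_imp_less_Suc)
  moreover have "det ((Gm R C (map Suc C))\<^sup>T) = det (Gm R C (map Suc C))"
    by (rule det_transpose) (use Gm_carrier[of R C "map Suc C"] l in simp)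
  ultimately show ?thesis using eq by simp
qed

lemma cover_rank:
  fixes A :: "real mat"
  assumes A: "A \<in> carrier_mat n nc" and s: "s \<le> nc"
    and z: "\<And>i j. k \<le> i \<Longrightarrow> i < n \<Longrightarrow> j < s \<Longrightarrow> A $$ (i,j) = 0"
  shows "vec_space.rank n A \<le> k + (nc - s)"
proof (rule rank_sum_rank1[OF A])
  fix i j assume i: "i < n" and j: "j < nc"
  define f where "f = (\<lambda>l i. if l < k then (if i = l then 1 else 0) else (if k \<le> i then A $$ (i, s + (l - k)) else (0::real)))"
  define g where "g = (\<lambda>l j. if l < k then A $$ (l, j) else (if j = s + (l - k) then 1 else (0::real)))"
  have "(\<Sum>l<k + (nc - s). f l i * g l j) = (\<Sum>l\<in>{0..<k}. f l i * g l j) + (\<Sum>l\<in>{k..<k + (nc - s)}. f l i * g l j)"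
    by (simp add: lessThan_atLeast0 sum.atLeastLessThan_concat)
  also have "(\<Sum>l\<in>{0..<k}. f l i * g l j) = (\<Sum>l\<in>{0..<k}. if l = i then A $$ (i,j) else 0)"
    by (rule sum.cong) (auto simp: f_def g_def)
  also have "\<dots> = (if i < k then A $$ (i,j) else 0)" by simp
  also have "(\<Sum>l\<in>{k..<k + (nc - s)}. f l i * g l j)
      = (\<Sum>l\<in>{k..<k + (nc - s)}. if l = k + (j - s) then (if k \<le> i \<and> s \<le> j then A $$ (i,j) else 0) else 0)"
    by (rule sum.cong) (auto simp: f_def g_def)
  also have "\<dots> = (if k \<le> i \<and> s \<le> j then A $$ (i,j) else 0)"
    using j s by auto
  finally show "A $$ (i,j) = (\<Sum>l<k + (nc - s). f l i * g l j)"
    using z[OF _ i] by (cases "k \<le> i"; cases "s \<le> j") auto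
qed



theorem corollary1:
  fixes r c \<alpha> \<beta> :: "nat list" and p :: nat
  assumes "selection r" and "r \<noteq> []"
    and "selection c" and "c \<noteq> []"
    and "ordered_subpair_idx r c \<alpha> \<beta>"
    and "length \<alpha> = p + 1"
  shows "mrank (pascal_sub (map ((!) r) \<alpha>) (map ((!) c) \<beta>)) = mrank (I_mat r c \<alpha> \<beta>)
       \<and> mrank (I_mat r c \<alpha> \<beta>) = p + 1
       \<and> (maximal_subpair_idx r c \<alpha> \<beta> \<longrightarrow> mrank (pascal_sub r c) = mrank (I_mat r c \<alpha> \<beta>))"
proof -
  have sr: "sorted_wrt (<) r" and sc: "sorted_wrt (<) c" using assms(1,3) by (auto simp: selection_def)
  have la: "length \<beta> = length \<alpha>" and sa: "sorted_wrt (<) \<alpha>" and sb: "sorted_wrt (<) \<beta>"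
    and ra: "\<forall>k\<in>set \<alpha>. k < length r" and rb: "\<forall>k\<in>set \<beta>. k < length c"
    and le: "\<forall>i<length \<alpha>. r ! (\<alpha> ! i) \<le> c ! (\<beta> ! i)"
    using assms(5) by (auto simp: ordered_subpair_idx_def)
  have ra': "\<alpha>!i < length r" if "i < length \<alpha>" for i using ra that by simp
  have rb': "\<beta>!i < length c" if "i < length \<alpha>" for i using rb that la by simp
  define R' where "R' = map ((!) r) \<alpha>"
  define C' where "C' = map ((!) c) \<beta>"
  let ?q = "p + 1"
  have lR': "length R' = ?q" and lC': "length C' = ?q" using assms(6) la by (auto simp: R'_def C'_def)
  have sR': "sorted_wrt (<) R'"
    unfolding sorted_wrt_iff_nth_less
  proof (intro allI impI)
    fix i j assume ij: "i < j" "j < length R'"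
    then have "\<alpha>!i < \<alpha>!j" using sa by (simp add: R'_def sorted_wrt_nth_less)
    then show "R'!i < R'!j" using ij sr ra'[of j] by (simp add: R'_def sorted_wrt_nth_less)
  qed
  have sC': "sorted_wrt (<) C'"
    unfolding sorted_wrt_iff_nth_less
  proof (intro allI impI)
    fix i j assume ij: "i < j" "j < length C'"
    then have "\<beta>!i < \<beta>!j" using sb by (simp add: C'_def sorted_wrt_nth_less)
    then show "C'!i < C'!j" using ij sc rb'[of j] la by (simp add: C'_def sorted_wrt_nth_less)
  qed
  have le': "\<forall>i<length R'. R'!i \<le> C'!i" using le la by (simp add: R'_def C'_def)
  have dpos: "det (pascal_sub R' C') > 0"
    by (rule pascal_det_pos[OF sR' sC' _ le']) (use lR' lC' in simp)
  have Pc: "pascal_sub R' C' \<in> carrier_mat ?q ?q" using lR' lC' by (simp add: pascal_sub_def)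
  have r1: "mrank (pascal_sub R' C') = ?q"
    using vec_space.det_rank_iff[OF Pc] dpos Pc by (simp add: mrank_def)
  let ?I = "I_mat r c \<alpha> \<beta>"
  have Ic: "?I \<in> carrier_mat (length r) (length c)" by (simp add: I_mat_def)
  have Iup: "vec_space.rank (length r) ?I \<le> ?q"
  proof -
    have "vec_space.rank (length r) ?I \<le> length \<alpha>"
    proof (rule rank_sum_rank1[OF Ic, where f = "\<lambda>l i. if i = \<alpha>!l then 1 else 0" and g = "\<lambda>l j. if j = \<beta>!l then 1 else 0"])
      fix i j assume i: "i < length r" and j: "j < length c"
      show "?I $$ (i,j) = (\<Sum>l<length \<alpha>. (if i = \<alpha>!l then 1 else 0) * (if j = \<beta>!l then 1 else 0))"
      proof (cases "\<exists>k<length \<alpha>. \<alpha> ! k = i \<and> \<beta> ! k = j")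
        case True
        then obtain k where k: "k < length \<alpha>" "\<alpha>!k = i" "\<beta>!k = j" by blast
        have "(\<Sum>l<length \<alpha>. (if i = \<alpha>!l then 1 else 0) * (if j = \<beta>!l then 1 else 0))
            = (\<Sum>l<length \<alpha>. if l = k then (1::real) else 0)"
        proof (rule sum.cong)
          fix l assume l: "l \<in> {..<length \<alpha>}"
          show "(if i = \<alpha>!l then 1 else 0) * (if j = \<beta>!l then 1 else 0) = (if l = k then (1::real) else 0)"
          proof (cases "l = k")
            case True
            then show ?thesis using k by simp
          next
            case False
            have "l < length \<alpha>" using l by simp
            then have "\<alpha>!l \<noteq> \<alpha>!k" using sorted_inj[OF sa _ k(1)] False by blast
            then show ?thesis using k False by simp
          qed
        qed simp
        then show ?thesis using True i j k by (simp add: I_mat_def)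
      next
        case False
        then have "(\<Sum>l<length \<alpha>. (if i = \<alpha>!l then 1 else 0) * (if j = \<beta>!l then 1 else 0)) = (0::real)"
          by (intro sum.neutral) auto
        then show ?thesis using False i j by (simp add: I_mat_def)
      qed
    qed
    then show ?thesis using assms(6) by simp
  qed
  have card_a: "card {i. i < length r \<and> i \<in> set \<alpha>} = ?q"
  proof -
    have "{i. i < length r \<and> i \<in> set \<alpha>} = set \<alpha>" using ra by auto
    then show ?thesis using distinct_card[OF iffD1[OF strict_sorted_iff sa, THEN conjunct2]] assms(6) by simp
  qed
  have card_b: "card {j. j < length c \<and> j \<in> set \<beta>} = ?q"
  proof -
    have "{j. j < length c \<and> j \<in> set \<beta>} = set \<beta>" using rb by auto
    then show ?thesis using distinct_card[OF iffD1[OF strict_sorted_iff sb, THEN conjunct2]] assms(6) la by simp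
  qed
  have Ilow: "?q \<le> vec_space.rank (length r) ?I"
  proof -
    have sub: "submatrix ?I (set \<alpha>) (set \<beta>) = 1\<^sub>m ?q"
    proof (rule eq_matI)
      fix i j assume i: "i < dim_row (1\<^sub>m ?q)" and j: "j < dim_col (1\<^sub>m ?q)"
      have i': "i < length \<alpha>" and j': "j < length \<alpha>" using i j assms(6) by auto
      have "submatrix ?I (set \<alpha>) (set \<beta>) $$ (i,j) = ?I $$ (pick (set \<alpha>) i, pick (set \<beta>) j)"
        by (rule submatrix_index) (use card_a card_b Ic i j in auto)
      also have "\<dots> = ?I $$ (\<alpha>!i, \<beta>!j)"
        using pick_sorted[OF sa i'] pick_sorted[OF sb] j' la by simp
      also have "\<dots> = (if i = j then 1 else 0)"
      proof -
        have "(\<exists>k<length \<alpha>. \<alpha> ! k = \<alpha>!i \<and> \<beta> ! k = \<beta>!j) \<longleftrightarrow> i = j"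
        proof
          assume "\<exists>k<length \<alpha>. \<alpha> ! k = \<alpha>!i \<and> \<beta> ! k = \<beta>!j"
          then obtain k where k: "k < length \<alpha>" "\<alpha> ! k = \<alpha>!i" "\<beta> ! k = \<beta>!j" by blast
          have "k = i" using sorted_inj[OF sa k(1) i' k(2)] .
          moreover have "k = j" using sorted_inj[OF sb _ _ k(3)] k(1) j' la by simp
          ultimately show "i = j" by simp
        next
          assume "i = j" then show "\<exists>k<length \<alpha>. \<alpha> ! k = \<alpha>!i \<and> \<beta> ! k = \<beta>!j" using i' by blast
        qed
        then show ?thesis using ra'[OF i'] rb'[OF j'] by (simp add: I_mat_def)
      qed
      finally show "submatrix ?I (set \<alpha>) (set \<beta>) $$ (i,j) = 1\<^sub>m ?q $$ (i,j)" using i j by simp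
    qed (use card_a card_b Ic in \<open>auto simp: dim_submatrix\<close>)
    show ?thesis using vec_space.rank_gt_minor[OF Ic, of "set \<alpha>" "set \<beta>"] sub card_b by simp
  qed
  have r2: "mrank ?I = ?q" using Iup Ilow Ic by (simp add: mrank_def)
  have r3: "maximal_subpair_idx r c \<alpha> \<beta> \<longrightarrow> mrank (pascal_sub r c) = ?q"
  proof
    assume mx: "maximal_subpair_idx r c \<alpha> \<beta>"
    let ?P = "pascal_sub r c"
    have Pc2: "?P \<in> carrier_mat (length r) (length c)" by (simp add: pascal_sub_def)
    have low: "?q \<le> vec_space.rank (length r) ?P"
    proof -
      have sub: "submatrix ?P (set \<alpha>) (set \<beta>) = pascal_sub R' C'"
      proof (rule eq_matI)
        fix i j assume i: "i < dim_row (pascal_sub R' C')" and j: "j < dim_col (pascal_sub R' C')"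
        have i': "i < length \<alpha>" and j': "j < length \<alpha>" using i j lR' lC' assms(6) by (auto simp: pascal_sub_def)
        have "submatrix ?P (set \<alpha>) (set \<beta>) $$ (i,j) = ?P $$ (pick (set \<alpha>) i, pick (set \<beta>) j)"
          by (rule submatrix_index) (use card_a card_b Pc2 i' j' assms(6) in auto)
        also have "\<dots> = ?P $$ (\<alpha>!i, \<beta>!j)"
          using pick_sorted[OF sa i'] pick_sorted[OF sb] j' la by simp
        also have "\<dots> = pascal_sub R' C' $$ (i,j)"
          using ra'[OF i'] rb'[OF j'] i' j' la by (simp add: pascal_index R'_def C'_def)
        finally show "submatrix ?P (set \<alpha>) (set \<beta>) $$ (i,j) = pascal_sub R' C' $$ (i,j)" .
      qed (use card_a card_b Pc2 lR' lC' in \<open>auto simp: dim_submatrix pascal_sub_def\<close>)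
      show ?thesis using vec_space.rank_gt_minor[OF Pc2, of "set \<alpha>" "set \<beta>"] sub card_b dpos by simp
    qed
    have up: "vec_space.rank (length r) ?P \<le> ?q"
    proof (cases "length r \<le> ?q \<or> length c \<le> ?q")
      case True
      then show ?thesis
      proof
        assume h: "length r \<le> ?q"
        have "vec_space.rank (length r) ?P \<le> length r + (length c - length c)"
          by (rule cover_rank[OF Pc2]) auto
        then show ?thesis using h by simp
      next
        assume h: "length c \<le> ?q"
        have "vec_space.rank (length r) ?P \<le> length c" by (rule vec_space.rank_le_nc[OF Pc2])
        then show ?thesis using h by simp
      qed
    next
      case False
      let ?n1 = "length c"
      define \<alpha>' where "\<alpha>' = [0..<?q + 1]"
      define \<beta>' where "\<beta>' = map (\<lambda>i. ?n1 - 1 - ?q + i) [0..<?q + 1]"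
      have "\<not> ordered_subpair_idx r c \<alpha>' \<beta>'"
        using mx assms(6) unfolding maximal_subpair_idx_def by (auto simp: \<alpha>'_def)
      moreover have "length \<alpha>' = length \<beta>'" "sorted_wrt (<) \<alpha>'" "sorted_wrt (<) \<beta>'"
          "\<forall>k\<in>set \<alpha>'. k < length r" "\<forall>k\<in>set \<beta>'. k < length c"
        using False by (auto simp: \<alpha>'_def \<beta>'_def sorted_wrt_iff_nth_less simp del: upt_Suc)
      ultimately have "\<not> (\<forall>i<length \<alpha>'. r ! (\<alpha>' ! i) \<le> c ! (\<beta>' ! i))"
        unfolding ordered_subpair_idx_def by blast
      then obtain k where k: "k < ?q + 1" and bad: "\<not> r ! k \<le> c ! (?n1 - 1 - ?q + k)"
        by (auto simp: \<alpha>'_def \<beta>'_def simp del: upt_Suc)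
      have "vec_space.rank (length r) ?P \<le> k + (?n1 - (?n1 - ?q + k))"
      proof (rule cover_rank[OF Pc2])
        show "?n1 - ?q + k \<le> ?n1" using False k by simp
        fix i j assume i: "k \<le> i" "i < length r" and j: "j < ?n1 - ?q + k"
        have "r!k \<le> r!i" using sorted_nth_mono[OF sr i] .
        moreover have "c!j \<le> c!(?n1 - 1 - ?q + k)"
          using sorted_nth_mono[OF sc, of j "?n1 - 1 - ?q + k"] j False k by simp
        ultimately have "c!j < r!i" using bad by simp
        then show "?P $$ (i,j) = 0" using i j False k by (simp add: pascal_index)
      qed
      then show ?thesis using False k by simp
    qed
    show "mrank (pascal_sub r c) = ?q" using low up Pc2 by (simp add: mrank_def)
  qed
  show ?thesis using r1 r2 r3 unfolding R'_def C'_def by simp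
qed

end
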